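(* Let $\rho\geqslant 2$ be an integer, let $(\mathcal{N}_n)_{n\geqslant 0}$ be Narayana's sequence, and let $\alpha\approx 1.46557$ be the unique real root of $x^3-x^2-1$. Suppose that non-negative integers $n,d_1,d_2,d_3,\ell,m,k$ satisfy $1\leqslant k\leqslant m\leqslant \ell$, $d_1,d_2,d_3\in\{0,1,\ldots,\rho-1\}$, $d_1>0$, and $$\mathcal{N}_n=d_1\frac{\rho^\ell-1}{\rho-1}\rho^{m+k}+d_2\frac{\rho^m-1}{\rho-1}\rho^{k}+d_3\frac{\rho^k-1}{\rho-1}.$$ Then $$(\ell+m+k-1)\log\rho+\log\alpha<n\log\alpha<(\ell+m+k)\log\rho+1.$$
   Context: Narayana's sequence is defined by $\mathcal{N}_0=0$, $\mathcal{N}_1=\mathcal{N}_2=1$ and $\mathcal{N}_n=\mathcal{N}_{n-1}+\mathcal{N}_{n-3}$ for $n\geqslant 3$. The right-hand side of the equation is the number whose base-$\rho$ representation consists of $\ell$ digits $d_1$, then $m$ digits $d_2$, then $k$ digits $d_3$. $\log$ is the natural logarithm. *)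

theory Defs
  imports Complex_Main
begin

fun narayana :: "nat \<Rightarrow> nat" where
  "narayana 0 = 0"
| "narayana (Suc 0) = 1"
| "narayana (Suc (Suc 0)) = 1"
| "narayana (Suc (Suc (Suc n))) = narayana (Suc (Suc n)) + narayana n"

definition narayana_alpha :: real where
  "narayana_alpha = (THE x::real. x ^ 3 - x ^ 2 - 1 = 0)"

end

theory Submission imports Defs begin

lemma alpha_props:
  shows "narayana_alpha ^ 3 = narayana_alpha ^ 2 + 1" "1.4655 \<le> narayana_alpha" "narayana_alpha \<le> 1.4656"
proof -
  define f where "f = (\<lambda>x::real. x ^ 3 - x ^ 2 - 1)"
  have c: "continuous_on {1.4655..1.4656} f" unfolding f_def by (intro continuous_intros)
  have "f 1.4655 \<le> 0" "0 \<le> f 1.4656" unfolding f_def by (simp_all add: power2_eq_square power3_eq_cube)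
  then obtain r where r: "1.4655 \<le> r" "r \<le> 1.4656" "f r = 0"
    using IVT'[of f "1.4655" 0 "1.4656"] c by auto
  have gt1: "x > 1" if "x ^ 3 - x ^ 2 - 1 = 0" for x :: real
  proof (rule ccontr)
    assume "\<not> x > 1"
    then have "x ^ 2 * (x - 1) \<le> 0" by (simp add: mult_nonneg_nonpos)
    moreover have "x ^ 3 - x ^ 2 = x ^ 2 * (x - 1)" by (simp add: algebra_simps power2_eq_square power3_eq_cube)
    ultimately show False using that by linarith
  qed
  have uniq: "x = r" if "x ^ 3 - x ^ 2 - 1 = 0" for x :: real
  proof -
    have x1: "x > 1" using gt1 that by blast
    have r1: "r > 1" using gt1 r(3) unfolding f_def by blast
    have "(x - r) * (x * (x - 1) + r * (r - 1) + x * r) = 0"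
      using that r(3) unfolding f_def by (simp add: algebra_simps power2_eq_square power3_eq_cube)
    moreover have "x * (x - 1) + r * (r - 1) + x * r > 0"
      using x1 r1 by (smt (verit) mult_pos_pos)
    ultimately show ?thesis by simp
  qed
  have r0: "r ^ 3 - r ^ 2 - 1 = 0" using r(3) unfolding f_def by simp
  have "narayana_alpha = r" unfolding narayana_alpha_def
    by (rule the_equality) (rule r0, rule uniq)
  then show "narayana_alpha ^ 3 = narayana_alpha ^ 2 + 1" "1.4655 \<le> narayana_alpha" "narayana_alpha \<le> 1.4656"
    using r r0 by auto
qed

lemma upper_N:
  fixes a :: real
  assumes a3: "a ^ 3 = a ^ 2 + 1" and lo: "1.4655 \<le> a"
  shows "real (narayana (j+2)) < a ^ (j+1) \<and> real (narayana (j+3)) < a ^ (j+2) \<and> real (narayana (j+4)) < a ^ (j+3)"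
proof (induction j)
  case 0
  have "1.4655 ^ 3 \<le> a ^ 3" by (rule power_mono) (use lo in auto)
  moreover have "1*1 < a*a" by (rule mult_strict_mono) (use lo in auto)
  ultimately show ?case using lo by (simp add: eval_nat_numeral power2_eq_square)
next
  case (Suc j)
  have e: "narayana (Suc j + 4) = narayana (j+4) + narayana (j+2)"
    by (simp add: eval_nat_numeral)
  have q: "a ^ (Suc j + 3) = a ^ (j+1) * a ^ 3" by (simp add: power_add eval_nat_numeral)
  have p: "a ^ (j+3) = a ^ (j+1) * a ^ 2" by (simp add: power_add eval_nat_numeral)
  have q2: "a ^ (Suc j + 3) = a ^ (j+3) + a ^ (j+1)" using q p a3 by (simp add: algebra_simps)
  have "real (narayana (Suc j + 4)) = real (narayana (j+4)) + real (narayana (j+2))" using e by simp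
  hence "real (narayana (Suc j + 4)) < a ^ (Suc j + 3)" using Suc.IH q2 by linarith
  moreover have eqs: "Suc j + 2 = j + 3" "Suc j + 1 = j + 2" "Suc j + 3 = j + 4" by simp_all
  ultimately show ?case using Suc.IH by (simp only: eqs; blast)
qed

lemma lower_N:
  fixes a :: real
  assumes a3: "a ^ 3 = a ^ 2 + 1" and lo: "1.4655 \<le> a" and hi: "a \<le> 1.4656"
  shows "a ^ (j+4) \<le> 2.5 * real (narayana (j+4)) \<and> a ^ (j+5) \<le> 2.5 * real (narayana (j+5)) \<and> a ^ (j+6) \<le> 2.5 * real (narayana (j+6))"
proof (induction j)
  case 0
  have "a ^ 4 \<le> 1.4656 ^ 4" "a ^ 5 \<le> 1.4656 ^ 5" "a ^ 6 \<le> 1.4656 ^ 6"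
    by (rule power_mono; use lo hi in auto)+
  moreover have "narayana (0+4) = 2" "narayana (0+5) = 3" "narayana (0+6) = 4"
    by (simp_all add: eval_nat_numeral)
  moreover have "(1.4656::real) ^ 4 \<le> 5" "(1.4656::real) ^ 5 \<le> 7.5" "(1.4656::real) ^ 6 \<le> 10"
    by (simp_all add: power_divide)
  ultimately show ?case by simp
next
  case (Suc j)
  have e: "narayana (Suc j + 6) = narayana (j+6) + narayana (j+4)"
    by (simp add: eval_nat_numeral)
  have q: "a ^ (Suc j + 6) = a ^ (j+4) * a ^ 3" by (simp add: power_add eval_nat_numeral)
  have p: "a ^ (j+6) = a ^ (j+4) * a ^ 2" by (simp add: power_add eval_nat_numeral)
  have q2: "a ^ (Suc j + 6) = a ^ (j+6) + a ^ (j+4)" using q p a3 by (simp add: algebra_simps)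
  have "real (narayana (Suc j + 6)) = real (narayana (j+6)) + real (narayana (j+4))" using e by simp
  hence "a ^ (Suc j + 6) \<le> 2.5 * real (narayana (Suc j + 6))" using Suc.IH q2 by linarith
  moreover have eqs: "Suc j + 4 = j + 5" "Suc j + 5 = j + 6" by simp_all
  ultimately show ?case using Suc.IH by (simp only: eqs; blast)
qed

lemma exp1_ge: "2.5 \<le> exp (1::real)"
proof -
  have e: "exp (1::real) = exp (1/8) ^ 8" using exp_of_nat_mult[of 8 "1/8::real"] by simp
  have h: "(9/8::real) ^ 8 \<le> exp (1/8) ^ 8"
    by (rule power_mono) (use exp_ge_add_one_self[of "1/8::real"] in auto)
  have "(2.5::real) \<le> (9/8) ^ 8" by (simp add: power_divide)
  then show ?thesis using e h by linarith
qed

theorem lemma3p1: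
  fixes \<rho> n d1 d2 d3 l m k :: nat
  assumes "\<rho> \<ge> 2"
    and "1 \<le> k" and "k \<le> m" and "m \<le> l"
    and "d1 < \<rho>" and "d2 < \<rho>" and "d3 < \<rho>" and "d1 > 0"
    and "real (narayana n) =
           real d1 * ((real \<rho> ^ l - 1) / (real \<rho> - 1)) * real \<rho> ^ (m + k)
         + real d2 * ((real \<rho> ^ m - 1) / (real \<rho> - 1)) * real \<rho> ^ k
         + real d3 * ((real \<rho> ^ k - 1) / (real \<rho> - 1))"
  shows "real (l + m + k - 1) * ln (real \<rho>) + ln narayana_alpha < real n * ln narayana_alpha
       \<and> real n * ln narayana_alpha < real (l + m + k) * ln (real \<rho>) + 1"
proof -
  define R where "R = real \<rho>"
  define a where "a = narayana_alpha"
  define L where "L = l + m + k"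
  have R2: "R \<ge> 2" using assms(1) unfolding R_def by simp
  have a3: "a ^ 3 = a ^ 2 + 1" and alo: "1.4655 \<le> a" and ahi: "a \<le> 1.4656"
    using alpha_props unfolding a_def by auto
  have apos: "a > 0" using alo by simp
  have q: "(R ^ x - 1) / (R - 1) \<ge> 0" for x
    using R2 by (simp add: one_le_power)
  have d1: "real d1 \<le> R - 1" "1 \<le> real d1" using assms(5,8) unfolding R_def by auto
  have d2: "real d2 \<le> R - 1" using assms(6) unfolding R_def by auto
  have d3: "real d3 \<le> R - 1" using assms(7) unfolding R_def by auto
  have Neq: "real (narayana n) =
           real d1 * ((R ^ l - 1) / (R - 1)) * R ^ (m + k)
         + real d2 * ((R ^ m - 1) / (R - 1)) * R ^ k
         + real d3 * ((R ^ k - 1) / (R - 1))" using assms(9) unfolding R_def by simp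
  have t1: "real d1 * ((R ^ l - 1) / (R - 1)) * R ^ (m + k) \<le> (R ^ l - 1) * R ^ (m + k)"
  proof -
    have "real d1 * ((R ^ l - 1) / (R - 1)) \<le> (R - 1) * ((R ^ l - 1) / (R - 1))"
      by (rule mult_right_mono) (use d1 q in auto)
    also have "\<dots> = R ^ l - 1" using R2 by simp
    finally show ?thesis using R2 by (intro mult_right_mono) auto
  qed
  have t2: "real d2 * ((R ^ m - 1) / (R - 1)) * R ^ k \<le> (R ^ m - 1) * R ^ k"
  proof -
    have "real d2 * ((R ^ m - 1) / (R - 1)) \<le> (R - 1) * ((R ^ m - 1) / (R - 1))"
      by (rule mult_right_mono) (use d2 q in auto)
    also have "\<dots> = R ^ m - 1" using R2 by simp
    finally show ?thesis using R2 by (intro mult_right_mono) auto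
  qed
  have t3: "real d3 * ((R ^ k - 1) / (R - 1)) \<le> R ^ k - 1"
  proof -
    have "real d3 * ((R ^ k - 1) / (R - 1)) \<le> (R - 1) * ((R ^ k - 1) / (R - 1))"
      by (rule mult_right_mono) (use d3 q in auto)
    also have "\<dots> = R ^ k - 1" using R2 by simp
    finally show ?thesis .
  qed
  have "(R ^ l - 1) * R ^ (m + k) + (R ^ m - 1) * R ^ k + (R ^ k - 1) = R ^ L - 1"
    unfolding L_def by (simp add: power_add algebra_simps)
  hence Nup: "real (narayana n) < R ^ L" using Neq t1 t2 t3 by linarith
  have lpos: "l \<ge> 1" using assms(2-4) by simp
  have "R ^ (l - 1) \<ge> 1" using R2 by (simp add: one_le_power)
  have "R ^ l = R * R ^ (l - 1)" using lpos by (metis Suc_diff_1 less_le_trans power_Suc zero_less_one)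
  hence "R ^ (l - 1) \<le> (R ^ l - 1) / (R - 1)" using R2 \<open>R ^ (l - 1) \<ge> 1\<close>
    by (simp add: field_simps)
  hence "R ^ (l - 1) \<le> real d1 * ((R ^ l - 1) / (R - 1))" using d1(2) q[of l]
    by (smt (verit) mult_left_mono mult_cancel_right1 mult.commute)
  hence "R ^ (l - 1) * R ^ (m + k) \<le> real d1 * ((R ^ l - 1) / (R - 1)) * R ^ (m + k)"
    using R2 by (intro mult_right_mono) auto
  moreover have "R ^ (l - 1) * R ^ (m + k) = R ^ (L - 1)"
    unfolding L_def using lpos by (simp add: power_add[symmetric] add.assoc)
  moreover have "0 \<le> real d2 * ((R ^ m - 1) / (R - 1)) * R ^ k"
    using q R2 by simp
  moreover have "0 \<le> real d3 * ((R ^ k - 1) / (R - 1))"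
    using q[of k] by (intro mult_nonneg_nonneg) auto
  ultimately have Nlo: "R ^ (L - 1) \<le> real (narayana n)" using Neq by linarith
  have "R ^ 2 \<le> R ^ (L - 1)" using R2 assms(2-4) unfolding L_def by (intro power_increasing) auto
  moreover have "4 \<le> R ^ 2"
  proof -
    have "2 * 2 \<le> R * R" by (rule mult_mono) (use R2 in auto)
    thus ?thesis by (simp add: power2_eq_square)
  qed
  ultimately have N4: "4 \<le> real (narayana n)" using Nlo by linarith
  have n4: "n \<ge> 4"
  proof (rule ccontr)
    assume "\<not> n \<ge> 4"
    hence "n = 0 \<or> n = 1 \<or> n = 2 \<or> n = 3" by auto
    hence "narayana n \<le> 1" by (auto simp: eval_nat_numeral)
    thus False using N4 by simp
  qed
  have u: "real (narayana n) < a ^ (n - 1)"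
    using upper_N[OF a3 alo, of "n - 2"] n4 by (simp add: Suc_diff_Suc numeral_2_eq_2)
  have lw: "a ^ n \<le> 2.5 * real (narayana n)"
    using lower_N[OF a3 alo ahi, of "n - 4"] n4 by simp
  have an: "a ^ n = a ^ (n - 1) * a" using n4
    by (metis Suc_diff_1 bot_nat_0.not_eq_extremum not_numeral_le_zero power_Suc2)
  have Rpos: "R > 0" using R2 by simp
  have ineq1: "R ^ (L - 1) * a < a ^ n"
    using Nlo u an apos by (metis le_less_trans mult_strict_right_mono)
  have ineq2: "a ^ n < R ^ L * exp 1"
  proof -
    have "a ^ n < 2.5 * R ^ L" using lw Nup by linarith
    also have "\<dots> \<le> exp 1 * R ^ L" using exp1_ge Rpos by (intro mult_right_mono) auto
    finally show ?thesis by (simp add: mult.commute)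
  qed
  have "ln (R ^ (L - 1) * a) < ln (a ^ n)" using ineq1 Rpos apos by simp
  hence g1: "real (L - 1) * ln R + ln a < real n * ln a"
    using Rpos apos by (simp add: ln_mult ln_realpow)
  have "ln (a ^ n) < ln (R ^ L * exp 1)" using ineq2 Rpos apos by simp
  hence g2: "real n * ln a < real L * ln R + 1"
    using Rpos apos by (simp add: ln_mult ln_realpow)
  show ?thesis using g1 g2 unfolding R_def a_def L_def by simp
qed

end
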